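(* Every indecomposable continuum $X$ that is $d(X)$-Baire is coastal: for every $x\in X$ there exists $p\in X$ with $p\neq x$ such that $\kappa(x;p)$ is dense in $X$.
   Context: A continuum is a nondegenerate compact connected Hausdorff space; it is indecomposable if it is not the union of two proper subcontinua. $d(X)$ is the least cardinality of a dense subset of $X$; $X$ is $\alpha$-Baire if every family of $\alpha$ many open dense subsets has dense intersection. $\kappa(x;p)$ denotes the union of all subcontinua $M$ of $X$ with $x\in M$, $M\neq X$ and $p\notin M$. *)

theory Defs
  imports "HOL-Analysis.Analysis" "HOL-Library.Equipollence"
begin

definition nondegenerate_in :: "'a topology \<Rightarrow> 'a set \<Rightarrow> bool" where
  "nondegenerate_in X M \<longleftrightarrow> (\<exists>a\<in>M. \<exists>b\<in>M. a \<noteq> b)"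

definition continuum :: "'a topology \<Rightarrow> bool" where
  "continuum X \<longleftrightarrow> Hausdorff_space X \<and> compact_space X \<and> connected_space X
     \<and> nondegenerate_in X (topspace X)"

definition subcontinuum :: "'a topology \<Rightarrow> 'a set \<Rightarrow> bool" where
  "subcontinuum X M \<longleftrightarrow> M \<subseteq> topspace X \<and> continuum (subtopology X M)"

definition indecomposable :: "'a topology \<Rightarrow> bool" where
  "indecomposable X \<longleftrightarrow> continuum X \<and>
     \<not> (\<exists>A B. subcontinuum X A \<and> A \<noteq> topspace X \<and> subcontinuum X B \<and> B \<noteq> topspace X
            \<and> A \<union> B = topspace X)"

definition dense_in :: "'a topology \<Rightarrow> 'a set \<Rightarrow> bool" where
  "dense_in X S \<longleftrightarrow> S \<subseteq> topspace X \<and> X closure_of S = topspace X"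

text \<open>X is alpha-Baire, where the cardinal alpha is given as the cardinality of the set A.\<close>
definition card_Baire :: "'a topology \<Rightarrow> 'b set \<Rightarrow> bool" where
  "card_Baire X A \<longleftrightarrow> (\<forall>\<F>. \<F> \<lesssim> A \<and> (\<forall>U\<in>\<F>. openin X U \<and> dense_in X U)
      \<longrightarrow> dense_in X (topspace X \<inter> \<Inter>\<F>))"

text \<open>X is d(X)-Baire: taking a dense set D of least cardinality, X is |D|-Baire.\<close>
definition density_Baire :: "'a topology \<Rightarrow> bool" where
  "density_Baire X \<longleftrightarrow> (\<exists>D. dense_in X D \<and> (\<forall>D'. dense_in X D' \<longrightarrow> D \<lesssim> D')
      \<and> card_Baire X D)"

definition kappa :: "'a topology \<Rightarrow> 'a \<Rightarrow> 'a \<Rightarrow> 'a set" where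
  "kappa X x p = \<Union>{M. subcontinuum X M \<and> x \<in> M \<and> M \<noteq> topspace X \<and> p \<notin> M}"

definition coastal :: "'a topology \<Rightarrow> bool" where
  "coastal X \<longleftrightarrow> (\<forall>x\<in>topspace X. \<exists>p\<in>topspace X. p \<noteq> x \<and> dense_in X (kappa X x p))"

end

theory Submission
  imports Defs
begin

lemma subcont_intro:
  assumes "Hausdorff_space X" "compact_space X" "closedin X M" "connectedin X M" "a \<in> M" "b \<in> M" "a \<noteq> b"
  shows "subcontinuum X M"
proof -
  have Mt: "M \<subseteq> topspace X" using assms(3) closedin_subset by blast
  have "topspace (subtopology X M) = M" using Mt by (simp add: Int_absorb1)
  then show ?thesis
    unfolding subcontinuum_def continuum_def nondegenerate_in_def
    using assms Mt Hausdorff_space_subtopology compact_space_subtopology closedin_compact_space connectedin_def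
    by metis
qed

lemma subcont_closed:
  assumes "Hausdorff_space X" "subcontinuum X M"
  shows "closedin X M" "connectedin X M" "M \<subseteq> topspace X"
  using assms unfolding subcontinuum_def continuum_def
  by (auto simp: connectedin_def compactin_subspace intro!: compactin_imp_closedin)

lemma subcont_two:
  assumes "subcontinuum X M"
  obtains a b where "a \<in> M" "b \<in> M" "a \<noteq> b"
  using assms unfolding subcontinuum_def continuum_def nondegenerate_in_def by auto

lemma comp_facts:
  assumes H: "Hausdorff_space X" "compact_space X" "connected_space X"
    and S: "closedin X S" "S \<noteq> topspace X" "x \<in> S"
  defines "C \<equiv> connected_component_of_set (subtopology X S) x"
  shows "C \<subseteq> S" "x \<in> C" "closedin X C" "connectedin X C" "C \<inter> X frontier_of S \<noteq> {}"
proof -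
  have tS: "topspace (subtopology X S) = S" using closedin_subset[OF S(1)] by (simp add: Int_absorb1)
  have xt: "x \<in> topspace (subtopology X S)" unfolding tS by (rule S(3))
  have Cc: "C \<in> connected_components_of (subtopology X S)"
    unfolding C_def connected_component_in_connected_components_of by (rule xt)
  show "C \<subseteq> S" unfolding C_def using connected_component_of_subset_topspace[of "subtopology X S" x]
    unfolding tS .
  show "x \<in> C" unfolding C_def mem_Collect_eq connected_component_of_refl by (rule xt)
  show "closedin X C" unfolding C_def
    by (rule closedin_trans_full[OF closedin_connected_component_of S(1)])
  have "connectedin (subtopology X S) C" unfolding C_def by (rule connectedin_connected_component_of)
  then show "connectedin X C" unfolding connectedin_subtopology by (rule conjunct1)
  show "C \<inter> X frontier_of S \<noteq> {}"
    using boundary_bumping_theorem_closed[OF H(3) H(2) H(1) S(1) S(2) Cc] .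
qed

lemma proper_sub_meeting:
  assumes H: "Hausdorff_space X" "compact_space X" "connected_space X"
    and x: "x \<in> topspace X" and V: "openin X V" "y \<in> V" "y \<noteq> x"
  shows "\<exists>M. subcontinuum X M \<and> x \<in> M \<and> M \<noteq> topspace X \<and> M \<inter> V \<noteq> {}"
proof -
  have reg: "regular_space X" using compact_Hausdorff_imp_regular_space[OF H(2) H(1)] .
  have t1: "\<forall>z\<in>topspace X. closedin X {z}"
    using Hausdorff_imp_t1_space[OF H(1)] unfolding t1_space_closedin_singleton .
  have "closedin X {x}" by (rule bspec[OF t1 x])
  then have W: "openin X (V - {x})" using V(1) by (intro openin_diff)
  have Vt: "V \<subseteq> topspace X" using openin_subset[OF V(1)] .
  have c1: "closedin X (topspace X - (V - {x}))" using W by (intro closedin_diff closedin_topspace)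
  have c2: "y \<in> topspace X - (topspace X - (V - {x}))" using V Vt by auto
  have "\<exists>U. openin X U \<and> y \<in> U \<and> disjnt (topspace X - (V - {x})) (X closure_of U)"
    using reg[unfolded regular_space, rule_format, OF conjI[OF c1 c2]] .
  then obtain U where U: "openin X U" "y \<in> U" "disjnt (topspace X - (V - {x})) (X closure_of U)"
    by auto
  have clU: "X closure_of U \<subseteq> V - {x}"
    using U(3) closure_of_subset_topspace[of X U] unfolding disjnt_def by auto
  have Ut: "U \<subseteq> topspace X" using openin_subset[OF U(1)] .
  have UclU: "U \<subseteq> X closure_of U" using closure_of_subset[OF Ut] .
  define S where "S = topspace X - U"
  have S1: "closedin X S" unfolding S_def using U(1) by (intro closedin_diff closedin_topspace)
  have S2: "S \<noteq> topspace X" unfolding S_def using U(2) Ut by blast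
  have S3: "x \<in> S" unfolding S_def using x UclU clU by blast
  define C where "C = connected_component_of_set (subtopology X S) x"
  note cf = comp_facts[OF H S1 S2 S3, folded C_def]
  obtain z where z: "z \<in> C" "z \<in> X frontier_of S" using cf(5) by blast
  have "topspace X - S = U" unfolding S_def using Ut by blast
  then have "X frontier_of S \<subseteq> X closure_of U" using frontier_of_closures[of X S] by simp
  then have zV: "z \<in> V" "z \<noteq> x" using z clU by blast+
  have "subcontinuum X C" using subcont_intro[OF H(1) H(2) cf(3) cf(4) cf(2) z(1) zV(2)[symmetric]] .
  moreover have "C \<noteq> topspace X"
  proof
    assume "C = topspace X"
    then have "y \<in> S" using cf(1) U(2) Ut by auto
    then show False using U(2) unfolding S_def by simp
  qed
  ultimately show ?thesis using cf(2) z(1) zV(1) by blast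
qed

lemma half_sub:
  assumes H: "Hausdorff_space X" "compact_space X" "connected_space X"
    and M: "subcontinuum X M"
    and U: "openin X U1" "openin X U2" "U1 \<inter> U2 = {}" "U1 \<union> U2 = topspace X - M" "U2 \<noteq> {}"
  shows "subcontinuum X (topspace X - U2)" "topspace X - U2 \<noteq> topspace X" "M \<subseteq> topspace X - U2"
proof -
  define A where "A = topspace X - U2"
  have Mc: "closedin X M" "connectedin X M" "M \<subseteq> topspace X" using subcont_closed[OF H(1) M] by auto
  have U2t: "U2 \<subseteq> topspace X" using openin_subset[OF U(2)] .
  have A1: "closedin X A" unfolding A_def using U(2) by (intro closedin_diff closedin_topspace)
  have A2: "A \<noteq> topspace X" unfolding A_def using U2t U(5) by auto
  have MA: "M \<subseteq> A" unfolding A_def using U(4) Mc(3) by auto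
  obtain a0 b0 where ab: "a0 \<in> M" "b0 \<in> M" "a0 \<noteq> b0" by (rule subcont_two[OF M])
  have MsubA: "connectedin (subtopology X A) M" unfolding connectedin_subtopology using Mc(2) MA by (rule conjI)
  have tA: "topspace (subtopology X A) = A" using closedin_subset[OF A1] by (simp add: Int_absorb1)
  have toM: "connected_component_of (subtopology X A) y a0" if y: "y \<in> A" for y
  proof -
    define C where "C = connected_component_of_set (subtopology X A) y"
    note cf = comp_facts[OF H A1 A2 y, folded C_def]
    obtain z where z: "z \<in> C" "z \<in> X frontier_of A" using cf(5) by auto
    have "topspace X - A = U2" unfolding A_def using U2t by auto
    then have fr: "X frontier_of A \<subseteq> X closure_of U2" using frontier_of_closures[of X A] by simp
    have "z \<in> X closure_of U2" using subsetD[OF fr z(2)] .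
    moreover have "U1 \<inter> X closure_of U2 = {}" using openin_Int_closure_of_eq_empty[OF U(1), of U2] U(3) by simp
    ultimately have "z \<notin> U1" by auto
    moreover have "z \<in> A" using subsetD[OF frontier_of_subset_closedin[OF A1] z(2)] .
    ultimately have zM: "z \<in> M" unfolding A_def using U(4) by auto
    have "connected_component_of (subtopology X A) y z" using z(1) unfolding C_def by simp
    moreover have "M \<subseteq> connected_component_of_set (subtopology X A) z"
      using connected_component_of_maximal[OF MsubA zM] .
    then have "connected_component_of (subtopology X A) z a0" using ab(1) by auto
    ultimately show ?thesis by (rule connected_component_of_trans)
  qed
  have "connected_space (subtopology X A)"
    unfolding connected_space_iff_connected_component tA
  proof (intro ballI)
    fix y w assume "y \<in> A" "w \<in> A"
    then have "connected_component_of (subtopology X A) y a0" "connected_component_of (subtopology X A) w a0"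
      using toM by auto
    then show "connected_component_of (subtopology X A) y w"
      using connected_component_of_sym connected_component_of_trans by metis
  qed
  then have cA: "connectedin X A" unfolding connectedin_def using closedin_subset[OF A1] by simp
  have "a0 \<in> A" "b0 \<in> A" using MA ab by auto
  then have "subcontinuum X A" using subcont_intro[OF H(1) H(2) A1 cA _ _ ab(3)] by simp
  then show "subcontinuum X (topspace X - U2)" unfolding A_def .
  show "topspace X - U2 \<noteq> topspace X" using A2 unfolding A_def .
  show "M \<subseteq> topspace X - U2" using MA unfolding A_def .
qed

lemma proper_nowhere_dense:
  assumes I: "indecomposable X" and M: "subcontinuum X M" "M \<noteq> topspace X"
  shows "X closure_of (topspace X - M) = topspace X"
proof (rule ccontr)
  assume nd: "X closure_of (topspace X - M) \<noteq> topspace X"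
  have H: "Hausdorff_space X" "compact_space X" "connected_space X"
    using I unfolding indecomposable_def continuum_def by auto
  have noDec: "\<not> (subcontinuum X A \<and> A \<noteq> topspace X \<and> subcontinuum X B \<and> B \<noteq> topspace X
            \<and> A \<union> B = topspace X)" for A B
    using I unfolding indecomposable_def by blast
  have Mc: "closedin X M" "connectedin X M" "M \<subseteq> topspace X" using subcont_closed[OF H(1) M(1)] by auto
  obtain a0 b0 where ab: "a0 \<in> M" "b0 \<in> M" "a0 \<noteq> b0" using subcont_two[OF M(1)] by blast
  define Ob where "Ob = topspace X - M"
  have Oo: "openin X Ob" unfolding Ob_def using Mc(1) by blast
  obtain q where q: "q \<in> Ob" unfolding Ob_def using M(2) Mc(3) by blast
  show False
  proof (cases "connectedin X Ob")
    case True
    define B where "B = X closure_of Ob"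
    have Bc: "closedin X B" "connectedin X B" unfolding B_def using True connectedin_closure_of by auto
    have OB: "Ob \<subseteq> B" unfolding B_def using closure_of_subset[OF openin_subset[OF Oo]] .
    have Bt: "B \<subseteq> topspace X" unfolding B_def by (rule closure_of_subset_topspace)
    have Obt: "Ob \<subseteq> topspace X" using openin_subset[OF Oo] .
    have "\<exists>q'\<in>Ob. q' \<noteq> q"
    proof (rule ccontr)
      assume "\<not> (\<exists>q'\<in>Ob. q' \<noteq> q)"
      then have Oq: "Ob = {q}" using q by blast
      have "openin X {q}" using Oo Oq by simp
      moreover have "closedin X {q}"
      proof -
        have t1: "\<forall>z\<in>topspace X. closedin X {z}"
          using Hausdorff_imp_t1_space[OF H(1)] unfolding t1_space_closedin_singleton .
        have "q \<in> topspace X" using q Obt by (rule subsetD[rotated])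
        then show ?thesis by (rule bspec[OF t1])
      qed
      ultimately have "{q} = {} \<or> {q} = topspace X" using H(3) unfolding connected_space_clopen_in by blast
      then have "{q} = topspace X" by blast
      moreover have "a0 \<in> topspace X" "a0 \<noteq> q" using ab(1) Mc(3) q unfolding Ob_def by auto
      ultimately show False by blast
    qed
    then obtain q' where q': "q' \<in> Ob" "q' \<noteq> q" by blast
    have "subcontinuum X B" using subcont_intro[OF H(1) H(2) Bc(1) Bc(2), of q q'] OB q q' by blast
    moreover have "B \<noteq> topspace X" using nd unfolding B_def Ob_def .
    moreover have "M \<union> B = topspace X" using OB Bt Mc(3) unfolding Ob_def by blast
    ultimately show False using noDec[of M B] M by blast
  next
    case False
    have Obt: "Ob \<subseteq> topspace X" using openin_subset[OF Oo] .
    obtain E1 E2 where E: "openin X E1" "openin X E2" "Ob \<subseteq> E1 \<union> E2" "E1 \<inter> E2 \<inter> Ob = {}"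
      "E1 \<inter> Ob \<noteq> {}" "E2 \<inter> Ob \<noteq> {}"
    proof -
      have ex: "\<exists>E1 E2. openin X E1 \<and> openin X E2 \<and> Ob \<subseteq> E1 \<union> E2 \<and> E1 \<inter> E2 \<inter> Ob = {} \<and> E1 \<inter> Ob \<noteq> {} \<and> E2 \<inter> Ob \<noteq> {}"
      proof (rule ccontr)
        assume nex: "\<nexists>E1 E2. openin X E1 \<and> openin X E2 \<and> Ob \<subseteq> E1 \<union> E2 \<and> E1 \<inter> E2 \<inter> Ob = {} \<and> E1 \<inter> Ob \<noteq> {} \<and> E2 \<inter> Ob \<noteq> {}"
        have "connectedin X Ob" unfolding connectedin by (rule conjI[OF Obt nex])
        with False show False by contradiction
      qed
      then show ?thesis using that by (elim exE conjE)
    qed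
    define U1 where "U1 = E1 \<inter> Ob"
    define U2 where "U2 = E2 \<inter> Ob"
    have U: "openin X U1" "openin X U2" "U1 \<inter> U2 = {}" "U1 \<union> U2 = topspace X - M" "U2 \<noteq> {}" "U1 \<noteq> {}"
    proof -
      show "openin X U1" unfolding U1_def using E(1) Oo by (rule openin_Int)
      show "openin X U2" unfolding U2_def using E(2) Oo by (rule openin_Int)
      show "U1 \<inter> U2 = {}" unfolding U1_def U2_def using E(4) by blast
      show "U1 \<union> U2 = topspace X - M" unfolding U1_def U2_def using E(3) unfolding Ob_def by blast
      show "U2 \<noteq> {}" "U1 \<noteq> {}" unfolding U1_def U2_def using E(5,6) by (simp_all add: Int_commute)
    qed
    have U': "U2 \<inter> U1 = {}" "U2 \<union> U1 = topspace X - M" using U(3,4) by (simp_all add: Int_commute Un_commute)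
    note h1 = half_sub[OF H M(1) U(1) U(2) U(3) U(4) U(5)]
    note h2 = half_sub[OF H M(1) U(2) U(1) U'(1) U'(2) U(6)]
    have U1t: "U1 \<subseteq> topspace X" using U(1) openin_subset by blast
    have cov: "(topspace X - U2) \<union> (topspace X - U1) = topspace X" using U(3) by blast
    show False
      by (rule notE[OF noDec[of "topspace X - U2" "topspace X - U1"]]) (intro conjI h1(1) h1(2) h2(1) h2(2) cov)
  qed
qed

definition composant :: "'a topology \<Rightarrow> 'a \<Rightarrow> 'a set" where
  "composant X x = \<Union>{M. subcontinuum X M \<and> x \<in> M \<and> M \<noteq> topspace X}"

lemma composant_dense:
  assumes H: "Hausdorff_space X" "compact_space X" "connected_space X"
    and x: "x \<in> topspace X" and nd: "\<exists>y\<in>topspace X. y \<noteq> x"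
  shows "X closure_of (composant X x) = topspace X" "x \<in> composant X x"
proof -
  show xin: "x \<in> composant X x"
  proof -
    obtain y where y: "y \<in> topspace X" "y \<noteq> x" using nd by blast
    have "\<exists>M. subcontinuum X M \<and> x \<in> M \<and> M \<noteq> topspace X \<and> M \<inter> topspace X \<noteq> {}"
      by (rule proper_sub_meeting[OF H x openin_topspace y])
    then obtain M where "subcontinuum X M" "x \<in> M" "M \<noteq> topspace X" by blast
    then show ?thesis unfolding composant_def by blast
  qed
  show "X closure_of (composant X x) = topspace X"
    unfolding dense_intersects_open
  proof (intro allI impI)
    fix T assume T: "openin X T \<and> T \<noteq> {}"
    show "composant X x \<inter> T \<noteq> {}"
    proof (cases "x \<in> T")
      case True then show ?thesis using xin by blast
    next
      case False
      then obtain y where y: "y \<in> T" "y \<noteq> x" using T by blast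
      have "\<exists>M. subcontinuum X M \<and> x \<in> M \<and> M \<noteq> topspace X \<and> M \<inter> T \<noteq> {}"
        using T by (intro proper_sub_meeting[OF H x _ y]) blast
      then obtain M where "subcontinuum X M" "x \<in> M" "M \<noteq> topspace X" "M \<inter> T \<noteq> {}" by blast
      then show ?thesis unfolding composant_def by blast
    qed
  qed
qed

lemma in_composant:
  "y \<in> composant X x \<longleftrightarrow> (\<exists>M. subcontinuum X M \<and> x \<in> M \<and> M \<noteq> topspace X \<and> y \<in> M)"
  unfolding composant_def by auto

lemma in_kappa:
  "y \<in> kappa X x p \<longleftrightarrow> (\<exists>M. subcontinuum X M \<and> x \<in> M \<and> M \<noteq> topspace X \<and> p \<notin> M \<and> y \<in> M)"
  unfolding kappa_def by auto

theorem mainTheorem4: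
  fixes X :: "'a topology"
  assumes "indecomposable X" and "density_Baire X"
  shows "coastal X"
  unfolding coastal_def
proof
  fix x assume x: "x \<in> topspace X"
  have H: "Hausdorff_space X" "compact_space X" "connected_space X"
    using assms(1) unfolding indecomposable_def continuum_def by auto
  have "nondegenerate_in X (topspace X)"
    using assms(1) unfolding indecomposable_def continuum_def by auto
  then have nd: "\<exists>y\<in>topspace X. y \<noteq> x" unfolding nondegenerate_in_def by metis
  note cd = composant_dense[OF H x nd]
  have kt: "kappa X x p \<subseteq> topspace X" for p
  proof
    fix y assume "y \<in> kappa X x p"
    then obtain M where "subcontinuum X M" "y \<in> M" unfolding in_kappa by auto
    then show "y \<in> topspace X" using subcont_closed(3)[OF H(1)] by auto
  qed
  show "\<exists>p\<in>topspace X. p \<noteq> x \<and> dense_in X (kappa X x p)"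
  proof (cases "topspace X \<subseteq> composant X x")
    case False
    then obtain p where p: "p \<in> topspace X" "p \<notin> composant X x" by auto
    have "kappa X x p = composant X x"
    proof (rule set_eqI)
      fix y
      have "\<forall>M. subcontinuum X M \<and> x \<in> M \<and> M \<noteq> topspace X \<longrightarrow> p \<notin> M"
        using p(2) unfolding in_composant by auto
      then show "y \<in> kappa X x p \<longleftrightarrow> y \<in> composant X x"
        unfolding in_kappa in_composant by auto
    qed
    then have "dense_in X (kappa X x p)" unfolding dense_in_def using cd(1) kt[of p] by simp
    moreover have "p \<noteq> x" using p cd(2) by auto
    ultimately show ?thesis using p(1) by auto
  next
    case True
    obtain D where D0: "dense_in X D \<and> (\<forall>D'. dense_in X D' \<longrightarrow> D \<lesssim> D') \<and> card_Baire X D"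
      using assms(2) unfolding density_Baire_def by (rule exE)
    have D: "dense_in X D" "card_Baire X D" using D0 by simp_all
    have Dt: "D \<subseteq> topspace X" "X closure_of D = topspace X" using D(1) unfolding dense_in_def by auto
    have "\<forall>d\<in>D. \<exists>M. subcontinuum X M \<and> x \<in> M \<and> M \<noteq> topspace X \<and> d \<in> M"
    proof
      fix d assume "d \<in> D"
      then have "d \<in> composant X x" using True Dt(1) by auto
      then show "\<exists>M. subcontinuum X M \<and> x \<in> M \<and> M \<noteq> topspace X \<and> d \<in> M"
        unfolding in_composant .
    qed
    then obtain Mf where Mf: "\<And>d. d \<in> D \<Longrightarrow> subcontinuum X (Mf d) \<and> x \<in> Mf d \<and> Mf d \<noteq> topspace X \<and> d \<in> Mf d"
      by metis
    define F where "F = (\<lambda>d. topspace X - Mf d) ` D"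
    have lep: "F \<lesssim> D" unfolding F_def by (rule image_lepoll)
    have opd: "\<forall>U\<in>F. openin X U \<and> dense_in X U"
    proof
      fix U assume "U \<in> F"
      then obtain d where d: "d \<in> D" "U = topspace X - Mf d" unfolding F_def by auto
      have M1: "subcontinuum X (Mf d)" "Mf d \<noteq> topspace X" using Mf[OF d(1)] by auto
      have "closedin X (Mf d)" using subcont_closed(1)[OF H(1) M1(1)] .
      then have "openin X U" using d(2) by auto
      moreover have "X closure_of U = topspace X"
        using proper_nowhere_dense[OF assms(1) M1] d(2) by simp
      moreover have "U \<subseteq> topspace X" using d(2) by auto
      ultimately show "openin X U \<and> dense_in X U" unfolding dense_in_def by simp
    qed
    have "dense_in X (topspace X \<inter> \<Inter>F)"
      using D(2)[unfolded card_Baire_def, rule_format, OF conjI[OF lep opd]] .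
    then have cl: "X closure_of (topspace X \<inter> \<Inter>F) = topspace X" unfolding dense_in_def by simp
    have "topspace X \<inter> \<Inter>F \<noteq> {}"
    proof
      assume "topspace X \<inter> \<Inter>F = {}"
      then have "topspace X = {}" using cl by simp
      then show False using x by simp
    qed
    then obtain p where p0: "p \<in> topspace X" "p \<in> \<Inter>F" by auto
    have p: "p \<notin> Mf d" if "d \<in> D" for d
    proof -
      have "topspace X - Mf d \<in> F" unfolding F_def using that by (rule imageI)
      then show ?thesis using p0 by auto
    qed
    have "D \<noteq> {}" using Dt(2) x by auto
    then obtain d0 where d0: "d0 \<in> D" by auto
    have px: "p \<noteq> x" using p[OF d0] Mf[OF d0] by auto
    have "D \<subseteq> kappa X x p"
    proof
      fix d assume d: "d \<in> D"
      have "subcontinuum X (Mf d) \<and> x \<in> Mf d \<and> Mf d \<noteq> topspace X \<and> p \<notin> Mf d \<and> d \<in> Mf d"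
        using Mf[OF d] p[OF d] by auto
      then show "d \<in> kappa X x p" unfolding in_kappa by auto
    qed
    then have "X closure_of D \<subseteq> X closure_of (kappa X x p)" by (rule closure_of_mono)
    then have "X closure_of (kappa X x p) = topspace X"
      using Dt(2) closure_of_subset_topspace[of X "kappa X x p"] by auto
    then have "dense_in X (kappa X x p)"
      unfolding dense_in_def using kt by auto
    then show ?thesis using p0(1) px by auto
  qed
qed

end
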